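(* The operator $(H_3f)(t)=\int_0^1\left(1+\frac12\sqrt[7]{4\left(t-\frac12\right)\left(u-\frac12\right)}\right)f^3(u)\,du$ on $C[0,1]$ has at least two distinct strictly positive fixed points.
   Context: For real $s$, $\sqrt[7]{s}$ denotes the real seventh root (negative for $s<0$). *)

theory Defs
  imports "HOL-Analysis.Analysis"
begin

text \<open>The operator H_3 on C[0,1]; root 7 is the real seventh root (odd root, negative for negative arguments).\<close>
definition H3 :: "(real \<Rightarrow> real) \<Rightarrow> real \<Rightarrow> real" where
  "H3 f t = integral {0..1}
     (\<lambda>u. (1 + (1/2) * root 7 (4 * (t - 1/2) * (u - 1/2))) * (f u) ^ 3)"

end

theory Submission imports Defs begin

definition psi :: "real \<Rightarrow> real" where "psi u = root 7 (2*u-1)"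

lemma psi_deriv:
  assumes "u \<noteq> 1/2"
  shows "(psi has_real_derivative 2 * inverse (7 * psi u ^ 6)) (at u)"
proof -
  have "DERIV (root 7) (2*u-1) :> inverse (real 7 * root 7 (2*u-1) ^ (7 - Suc 0))"
    by (rule DERIV_real_root_generic) (use assms in auto)
  moreover have "((\<lambda>u. 2*u-1) has_real_derivative 2) (at u)"
    by (auto intro!: derivative_eq_intros)
  ultimately have "((\<lambda>u. root 7 (2*u-1)) has_real_derivative inverse (real 7 * root 7 (2*u-1) ^ (7 - Suc 0)) * 2) (at u)"
    by (rule DERIV_chain2)
  thus ?thesis unfolding psi_def by (simp add: mult.commute)
qed

lemma psi_nz: "u \<noteq> 1/2 \<Longrightarrow> psi u \<noteq> 0"
  unfolding psi_def by simp

lemma moment: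
  "((\<lambda>u. psi u ^ k) has_integral (7/(2*(real k+7)) * (1 + (-1)^k))) {0..1}"
proof -
  define F where "F u = 7/(2*(real k+7)) * psi u ^ (k+7)" for u
  have "((\<lambda>u. psi u ^ k) has_integral (F 1 - F 0)) {0..1}"
  proof (rule fundamental_theorem_of_calculus_interior_strong[of "{1/2}"])
    fix x :: real assume x: "x \<in> {0<..<1} - {1/2}"
    hence xn: "x \<noteq> 1/2" by auto
    have "(F has_real_derivative 7/(2*(real k+7)) * (real (k+7) * ((2 * inverse (7 * psi x ^ 6)) * psi x ^ (k+7 - Suc 0)))) (at x)"
      unfolding F_def
      unfolding F_def by (rule DERIV_cmult[OF DERIV_power[OF psi_deriv[OF xn]]])
    moreover have "7/(2*(real k+7)) * (real (k+7) * ((2 * inverse (7 * psi x ^ 6)) * psi x ^ (k+7 - Suc 0))) = psi x ^ k"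
      using psi_nz[OF xn] by (simp add: field_simps power_add power_Suc[symmetric] del: power_Suc)
    ultimately show "(F has_vector_derivative psi x ^ k) (at x)"
      by (simp add: has_real_derivative_iff_has_vector_derivative)
  next
    show "continuous_on {0..1} F" unfolding F_def psi_def
      by (intro continuous_intros)
  qed auto
  moreover have "F 1 - F 0 = 7/(2*(real k+7)) * (1 + (-1)^k)"
  proof -
    have "psi 1 = 1" "psi 0 = -1" unfolding psi_def by (simp_all add: real_root_minus)
    moreover have "(-1::real)^(k+7) = -((-1)^k)" by (simp add: power_add)
    ultimately show ?thesis unfolding F_def by (simp add: algebra_simps add_divide_distrib)
  qed
  ultimately show ?thesis by simp
qed


lemma poly_int:
  fixes c0 c1 c2 c3 c4 :: real
  shows  "((\<lambda>u. c0 + c1*psi u + c2*psi u^2 + c3*psi u^3 + c4*psi u^4) has_integral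
     (c0 + c2*(7/9) + c4*(7/11))) {0..1}"
proof -
  have h0': "((\<lambda>u. c0 * psi u ^ 0) has_integral c0 * 1) {0..1}"
    by (rule has_integral_mult_right) (use moment[of 0] in simp)
  have h0: "((\<lambda>u::real. c0) has_integral c0) {0..1}"
    using h0' by simp
  have h1: "((\<lambda>u. c1 * psi u ^ 1) has_integral c1 * 0) {0..1}"
    by (rule has_integral_mult_right) (use moment[of 1] in simp)
  have h2: "((\<lambda>u. c2 * psi u ^ 2) has_integral c2 * (7/9)) {0..1}"
    by (rule has_integral_mult_right) (use moment[of 2] in simp)
  have h3: "((\<lambda>u. c3 * psi u ^ 3) has_integral c3 * 0) {0..1}"
    by (rule has_integral_mult_right) (use moment[of 3] in simp)
  have h4: "((\<lambda>u. c4 * psi u ^ 4) has_integral c4 * (7/11)) {0..1}"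
    by (rule has_integral_mult_right) (use moment[of 4] in simp)
  have "((\<lambda>u. c0 + c1 * psi u ^ 1 + c2*psi u^2 + c3*psi u^3 + c4*psi u^4) has_integral
     (c0 + c1 * 0 + c2*(7/9) + c3 * 0 + c4*(7/11))) {0..1}"
    by (intro has_integral_add h0 h1 h2 h3 h4)
  thus ?thesis by simp
qed

lemma root_split: "root 7 (4 * (t - 1/2) * (u - 1/2)) = psi t * psi u"
proof -
  have "4 * (t - 1/2) * (u - 1/2) = (2*t-1)*(2*u-1)" by (simp add: algebra_simps)
  thus ?thesis unfolding psi_def by (simp add: real_root_mult)
qed

lemma H3_affine:
  fixes A B :: real
  shows "H3 (\<lambda>u. A + B * psi u) t =
    A^3 + 3*A*B^2*(7/9) + psi t / 2 * (3*A^2*B*(7/9) + B^3*(7/11))"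
proof -
  define q where "q = psi t / 2"
  have eq: "(\<lambda>u. (1 + (1/2) * root 7 (4 * (t - 1/2) * (u - 1/2))) * (A + B * psi u) ^ 3)
    = (\<lambda>u. A^3 + (3*A^2*B + q*A^3)*psi u + (3*A*B^2 + 3*q*A^2*B)*psi u^2
         + (B^3 + 3*q*A*B^2)*psi u^3 + (q*B^3)*psi u^4)"
    unfolding root_split q_def by (rule ext) (simp add: algebra_simps power2_eq_square power3_eq_cube power4_eq_xxxx)
  show ?thesis unfolding H3_def eq
    by (rule integral_unique[OF poly_int[THEN has_integral_eq_rhs]]) (simp add: q_def algebra_simps)
qed

lemma psi_bound: "u \<in> {0..1} \<Longrightarrow> \<bar>psi u\<bar> \<le> 1"
proof -
  assume "u \<in> {0..1}"
  hence "\<bar>2*u-1\<bar> \<le> 1" by auto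
  hence "root 7 \<bar>2*u-1\<bar> \<le> root 7 1" by simp
  thus ?thesis unfolding psi_def by (simp add: real_root_abs)
qed

lemma psi_cont: "continuous_on S psi"
  unfolding psi_def by (intro continuous_intros)

theorem proposition4p1:
  shows "\<exists>f g :: real \<Rightarrow> real.
           continuous_on {0..1} f \<and> continuous_on {0..1} g \<and>
           (\<forall>t\<in>{0..1}. f t > 0) \<and> (\<forall>t\<in>{0..1}. g t > 0) \<and>
           (\<forall>t\<in>{0..1}. H3 f t = f t) \<and> (\<forall>t\<in>{0..1}. H3 g t = g t) \<and>
           (\<exists>t\<in>{0..1}. f t \<noteq> g t)"
proof -
  define A :: real where "A = sqrt (399/476)"
  define B :: real where "B = sqrt (33/476)"
  have A2: "A^2 = 399/476" unfolding A_def by simp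
  have B2: "B^2 = 33/476" unfolding B_def by simp
  have BA: "B < A" unfolding A_def B_def by simp
  have B0: "0 \<le> B" unfolding B_def by simp
  define f where "f = (\<lambda>u. A + B * psi u)"
  define g where "g = (\<lambda>u::real. 1 + 0 * psi u)"
  have cf: "continuous_on {0..1} f" unfolding f_def by (intro continuous_intros psi_cont)
  have cg: "continuous_on {0..1} g" unfolding g_def by (intro continuous_intros psi_cont)
  have pf: "\<forall>t\<in>{0..1}. f t > 0"
  proof
    fix t :: real assume t: "t \<in> {0..1}"
    have "\<bar>B * psi t\<bar> \<le> B" using psi_bound[OF t] B0
      by (simp add: abs_mult mult_left_le)
    thus "f t > 0" unfolding f_def using BA by linarith
  qed
  have pg: "\<forall>t\<in>{0..1}. g t > 0" unfolding g_def by simp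
  have ff: "\<forall>t\<in>{0..1}. H3 f t = f t"
  proof
    fix t :: real assume t: "t \<in> {0..1}"
    have e1: "A^3 + 3*A*B^2*(7/9) = A"
    proof -
      have "A^3 = A^2 * A" by (simp add: power3_eq_cube power2_eq_square)
      thus ?thesis by (simp add: A2 B2)
    qed
    have e2: "3*A^2*B*(7/9) + B^3*(7/11) = 2 * B"
    proof -
      have "B^3 = B^2 * B" by (simp add: power3_eq_cube power2_eq_square)
      thus ?thesis by (simp add: A2 B2)
    qed
    show "H3 f t = f t" unfolding f_def H3_affine e1 e2 by simp
  qed
  have gg: "\<forall>t\<in>{0..1}. H3 g t = g t"
    unfolding g_def using H3_affine[of 1 0] by simp
  have "psi (1/2) = 0" unfolding psi_def by simp
  moreover have "A \<noteq> 1" using A2 by auto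
  ultimately have "f (1/2) \<noteq> g (1/2)" unfolding f_def g_def by simp
  hence "\<exists>t\<in>{0..1}. f t \<noteq> g t" by (intro bexI[of _ "1/2"]) auto
  with cf cg pf pg ff gg show ?thesis by blast
qed

end
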